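(* Fix a finite alphabet $\mathcal{X}$, integers $M_1\ge M_2\ge K\ge1$, reals $\alpha,\beta>0$, and let $\xi_N=\lceil\alpha N\rceil$, $\chi_N=\lceil\beta N\rceil$. For each $N$, let $\Phi_{\mathrm{FL},N}$ be the fixed-length test which observes $(\mathbf{X}^{\xi_N},\mathbf{Y}^{\chi_N})$ and decides $\mathrm{H}_l^K$ with $l=\arg\min_{t\in[T_K]}\mathrm{S}_t^K(\mathbf{X}^{\xi_N},\mathbf{Y}^{\chi_N})$. Then for every $l\in[T_K]$ and every $(P^{M_1},Q^{M_2})\in\mathcal{P}_l^K$, $$\liminf_{N\to\infty}\frac{-\log\beta(\Phi_{\mathrm{FL},N}|P^{M_1},Q^{M_2})}{N}\ge E_{\mathrm{f}}(l,K,P^{M_1},Q^{M_2}).$$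
   Context: Model: $\mathcal{P}(\mathcal{X})$ is the set of distributions on $\mathcal{X}$. For $i\in[M_1]$, $X_i^{\xi_N}=(X_{i,1},\dots,X_{i,\xi_N})$ is i.i.d. $P_i$; for $j\in[M_2]$, $Y_j^{\chi_N}$ is i.i.d. $Q_j$; all independent; within each database the distributions are distinct. A $K$-match is a set of $K$ pairs in $[M_1]\times[M_2]$ with no two pairs sharing a first or a second coordinate; there are $T_K=\binom{M_1}{K}\binom{M_2}{K}K!$ of them, $\mathcal{M}_1^K,\dots,\mathcal{M}_{T_K}^K$. $\mathcal{P}_l^K:=\{(\tilde P^{M_1},\tilde Q^{M_2}):\tilde P_i=\tilde Q_j\text{ iff }(i,j)\in\mathcal{M}_l^K\}$ (hypothesis $\mathrm{H}_l^K$). Mismatch probability $\beta(\Phi|P^{M_1},Q^{M_2})$ = probability, under $(P^{M_1},Q^{M_2})\in\mathcal{P}_l^K$, that the decision differs from $\mathrm{H}_l^K$. Notation: $\hat T_{x^n}$ is the empirical distribution (type) of $x^n$; $D$ is KL divergence; $R_{\alpha,\beta}^{P,Q}=\frac{\alpha P+\beta Q}{\alpha+\beta}$; $\mathrm{GJS}(P,Q,\alpha,\beta)=\alpha D(P\|R_{\alpha,\beta}^{P,Q})+\beta D(Q\|R_{\alpha,\beta}^{P,Q})$; $\mathrm{G}_t^K(P^{M_1},Q^{M_2},\alpha,\beta)=\sum_{(i,j)\in\mathcal{M}_t^K}\mathrm{GJS}(P_i,Q_j,\alpha,\beta)$; $\mathrm{S}_t^K(\mathbf{x}^{\xi_N},\mathbf{y}^{\chi_N})=\mathrm{G}_t^K((\hat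 T_{x_i^{\xi_N}})_i,(\hat T_{y_j^{\chi_N}})_j,\alpha,\beta)$. $E(P^{M_1},Q^{M_2},\Omega^{M_1},\Psi^{M_2},\alpha,\beta)=\sum_{i\in[M_1]}\alpha D(\Omega_i\|P_i)+\sum_{j\in[M_2]}\beta D(\Psi_j\|Q_j)$, and $E_{\mathrm{f}}(l,K,P^{M_1},Q^{M_2}):=\min_{t\in[T_K],t\ne l}\ \min_{(\Omega^{M_1},\Psi^{M_2})\in\mathcal{P}(\mathcal{X})^{M_1+M_2}:\ \mathrm{G}_t^K(\Omega^{M_1},\Psi^{M_2},\alpha,\beta)\le\mathrm{G}_l^K(\Omega^{M_1},\Psi^{M_2},\alpha,\beta)}E(P^{M_1},Q^{M_2},\Omega^{M_1},\Psi^{M_2},\alpha,\beta)$. *)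

theory Defs
  imports "HOL-Probability.Probability"
begin

definition emp_type :: "nat \<Rightarrow> (nat \<Rightarrow> 'a) \<Rightarrow> 'a \<Rightarrow> real" where
  "emp_type n xs a = real (card {k. k < n \<and> xs k = a}) / real n"

definition KL :: "('a::finite \<Rightarrow> real) \<Rightarrow> ('a \<Rightarrow> real) \<Rightarrow> ereal" where
  "KL p q = (\<Sum>x\<in>UNIV. if p x = 0 then 0
                         else if q x = 0 then \<infinity>
                         else ereal (p x * ln (p x / q x)))"

definition mixR :: "real \<Rightarrow> real \<Rightarrow> ('a \<Rightarrow> real) \<Rightarrow> ('a \<Rightarrow> real) \<Rightarrow> 'a \<Rightarrow> real" where
  "mixR \<alpha> \<beta> p q = (\<lambda>x. (\<alpha> * p x + \<beta> * q x) / (\<alpha> + \<beta>))"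

definition GJS :: "('a::finite \<Rightarrow> real) \<Rightarrow> ('a \<Rightarrow> real) \<Rightarrow> real \<Rightarrow> real \<Rightarrow> ereal" where
  "GJS p q \<alpha> \<beta> = ereal \<alpha> * KL p (mixR \<alpha> \<beta> p q) + ereal \<beta> * KL q (mixR \<alpha> \<beta> p q)"

(* K-matches between [M1] and [M2] (0-based indices) *)
definition kmatches :: "nat \<Rightarrow> nat \<Rightarrow> nat \<Rightarrow> (nat \<times> nat) set set" where
  "kmatches M1 M2 K = {S. S \<subseteq> {..<M1} \<times> {..<M2} \<and> card S = K \<and> inj_on fst S \<and> inj_on snd S}"

definition Gsum :: "(nat \<times> nat) set \<Rightarrow> (nat \<Rightarrow> 'a::finite \<Rightarrow> real) \<Rightarrow> (nat \<Rightarrow> 'a \<Rightarrow> real)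
                    \<Rightarrow> real \<Rightarrow> real \<Rightarrow> ereal" where
  "Gsum S p q \<alpha> \<beta> = (\<Sum>(i,j)\<in>S. GJS (p i) (q j) \<alpha> \<beta>)"

definition Sstat :: "(nat \<times> nat) set \<Rightarrow> nat \<Rightarrow> nat \<Rightarrow> (nat \<Rightarrow> nat \<Rightarrow> 'a::finite)
                     \<Rightarrow> (nat \<Rightarrow> nat \<Rightarrow> 'a) \<Rightarrow> real \<Rightarrow> real \<Rightarrow> ereal" where
  "Sstat S n m xs ys \<alpha> \<beta> = Gsum S (\<lambda>i. emp_type n (xs i)) (\<lambda>j. emp_type m (ys j)) \<alpha> \<beta>"

definition in_hyp :: "nat \<Rightarrow> nat \<Rightarrow> (nat \<times> nat) set \<Rightarrow> (nat \<Rightarrow> 'a pmf) \<Rightarrow> (nat \<Rightarrow> 'a pmf) \<Rightarrow> bool" where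
  "in_hyp M1 M2 l P Q \<longleftrightarrow> (\<forall>i<M1. \<forall>j<M2. P i = Q j \<longleftrightarrow> (i, j) \<in> l)"

definition samples :: "nat \<Rightarrow> nat \<Rightarrow> (nat \<Rightarrow> nat \<Rightarrow> 'a) set" where
  "samples M n = PiE {..<M} (\<lambda>_. PiE {..<n} (\<lambda>_. UNIV))"

definition mismatch_prob :: "nat \<Rightarrow> nat \<Rightarrow> nat \<Rightarrow> nat \<Rightarrow> (nat \<Rightarrow> 'a::finite pmf) \<Rightarrow> (nat \<Rightarrow> 'a pmf)
      \<Rightarrow> (nat \<times> nat) set \<Rightarrow> ((nat \<Rightarrow> nat \<Rightarrow> 'a) \<Rightarrow> (nat \<Rightarrow> nat \<Rightarrow> 'a) \<Rightarrow> (nat \<times> nat) set) \<Rightarrow> real" where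
  "mismatch_prob M1 M2 n m P Q l dec =
     (\<Sum>xs\<in>samples M1 n. \<Sum>ys\<in>samples M2 m.
        if dec xs ys \<noteq> l
        then (\<Prod>i<M1. \<Prod>k<n. pmf (P i) (xs i k)) * (\<Prod>j<M2. \<Prod>k<m. pmf (Q j) (ys j k))
        else 0)"

definition xiN :: "real \<Rightarrow> nat \<Rightarrow> nat" where
  "xiN \<alpha> N = nat \<lceil>\<alpha> * real N\<rceil>"

(* dec is a fixed-length test: at every N it outputs a K-match minimizing S_t^K
   (any tie-breaking rule) *)
definition is_FL_test :: "nat \<Rightarrow> nat \<Rightarrow> nat \<Rightarrow> real \<Rightarrow> real
      \<Rightarrow> (nat \<Rightarrow> (nat \<Rightarrow> nat \<Rightarrow> 'a::finite) \<Rightarrow> (nat \<Rightarrow> nat \<Rightarrow> 'a) \<Rightarrow> (nat \<times> nat) set) \<Rightarrow> bool" where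
  "is_FL_test M1 M2 K \<alpha> \<beta> dec \<longleftrightarrow>
     (\<forall>N xs ys. xs \<in> samples M1 (xiN \<alpha> N) \<longrightarrow> ys \<in> samples M2 (xiN \<beta> N) \<longrightarrow>
        dec N xs ys \<in> kmatches M1 M2 K \<and>
        (\<forall>t\<in>kmatches M1 M2 K.
           Sstat (dec N xs ys) (xiN \<alpha> N) (xiN \<beta> N) xs ys \<alpha> \<beta>
             \<le> Sstat t (xiN \<alpha> N) (xiN \<beta> N) xs ys \<alpha> \<beta>))"

definition Eexp :: "nat \<Rightarrow> nat \<Rightarrow> real \<Rightarrow> real \<Rightarrow> (nat \<Rightarrow> 'a::finite pmf) \<Rightarrow> (nat \<Rightarrow> 'a pmf)
                    \<Rightarrow> (nat \<Rightarrow> 'a pmf) \<Rightarrow> (nat \<Rightarrow> 'a pmf) \<Rightarrow> ereal" where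
  "Eexp M1 M2 \<alpha> \<beta> P Q \<Omega> \<Psi> =
     (\<Sum>i<M1. ereal \<alpha> * KL (pmf (\<Omega> i)) (pmf (P i))) + (\<Sum>j<M2. ereal \<beta> * KL (pmf (\<Psi> j)) (pmf (Q j)))"

definition Ef :: "nat \<Rightarrow> nat \<Rightarrow> nat \<Rightarrow> real \<Rightarrow> real \<Rightarrow> (nat \<times> nat) set
                  \<Rightarrow> (nat \<Rightarrow> 'a::finite pmf) \<Rightarrow> (nat \<Rightarrow> 'a pmf) \<Rightarrow> ereal" where
  "Ef M1 M2 K \<alpha> \<beta> l P Q =
     (INF t \<in> kmatches M1 M2 K - {l}.
        INF \<Omega>\<Psi> \<in> {(\<Omega>, \<Psi>). Gsum t (\<lambda>i. pmf (\<Omega> i)) (\<lambda>j. pmf (\<Psi> j)) \<alpha> \<beta>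
                            \<le> Gsum l (\<lambda>i. pmf (\<Omega> i)) (\<lambda>j. pmf (\<Psi> j)) \<alpha> \<beta>}.
          Eexp M1 M2 \<alpha> \<beta> P Q (fst \<Omega>\<Psi>) (snd \<Omega>\<Psi>))"

definition exponent_at :: "real \<Rightarrow> nat \<Rightarrow> ereal" where
  "exponent_at b N = (if b = 0 then \<infinity> else ereal (- ln b / real N))"

end

theory Submission
  imports Defs "HOL-Real_Asymp.Real_Asymp"
begin

lemma cnt_sum:
  fixes x :: "nat \<Rightarrow> 'a::finite"
  shows "(\<Sum>a\<in>UNIV. card {k. k < n \<and> x k = a}) = n"
proof -
  have "(\<Sum>a\<in>UNIV. \<Sum>k\<in>{k\<in>{..<n}. x k = a}. (1::nat)) = (\<Sum>k\<in>{..<n}. 1)"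
    by (rule sum.group) auto
  then show ?thesis by simp
qed

lemma emp_sum:
  fixes x :: "nat \<Rightarrow> 'a::finite"
  assumes "n > 0" shows "(\<Sum>a\<in>UNIV. emp_type n x a) = 1"
proof -
  have "(\<Sum>a\<in>UNIV. emp_type n x a) = (\<Sum>a\<in>UNIV. real (card {k. k < n \<and> x k = a})) / real n"
    unfolding emp_type_def by (simp add: sum_divide_distrib)
  also have "(\<Sum>a\<in>UNIV. real (card {k. k < n \<and> x k = a})) = real n"
    using cnt_sum[of n x] by (metis of_nat_sum)
  finally show ?thesis using assms by simp
qed

lemma emp_nonneg: "0 \<le> emp_type n x a"
  unfolding emp_type_def by simp

lemma emp_card_le: "card {k. k < n \<and> x k = a} \<le> n"
proof -
  have "card {k. k < n \<and> x k = a} \<le> card {..<n}" by (rule card_mono) auto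
  then show ?thesis by simp
qed

lemma pmf_emp:
  fixes x :: "nat \<Rightarrow> 'a::finite"
  assumes "n > 0" shows "pmf (embed_pmf (emp_type n x)) = emp_type n x"
proof
  fix a
  have "(\<integral>\<^sup>+y. ennreal (emp_type n x y) \<partial>count_space UNIV) = (\<Sum>y\<in>UNIV. ennreal (emp_type n x y))"
    by (simp add: nn_integral_count_space_finite)
  also have "\<dots> = ennreal (\<Sum>y\<in>UNIV. emp_type n x y)"
    by (rule sum_ennreal) (simp add: emp_nonneg)
  also have "\<dots> = 1" using emp_sum[OF assms] by simp
  finally show "pmf (embed_pmf (emp_type n x)) a = emp_type n x a"
    by (intro pmf_embed_pmf) (auto simp: emp_nonneg)
qed

lemma prodg:
  fixes f :: "'a::finite \<Rightarrow> real" and x :: "nat \<Rightarrow> 'a"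
  shows "(\<Prod>k<n. f (x k)) = (\<Prod>a\<in>UNIV. f a ^ card {k. k < n \<and> x k = a})"
proof -
  have "(\<Prod>a\<in>UNIV. \<Prod>k\<in>{k\<in>{..<n}. x k = a}. f (x k)) = (\<Prod>k\<in>{..<n}. f (x k))"
    by (rule prod.group) (auto simp: finite_lessThan)
  moreover have "(\<Prod>k\<in>{k\<in>{..<n}. x k = a}. f (x k)) = f a ^ card {k. k < n \<and> x k = a}" for a
  proof -
    have "(\<Prod>k\<in>{k\<in>{..<n}. x k = a}. f (x k)) = (\<Prod>k\<in>{k\<in>{..<n}. x k = a}. f a)"
      by (rule prod.cong) auto
    also have "\<dots> = f a ^ card {k. k < n \<and> x k = a}" by simp
    finally show ?thesis .
  qed
  ultimately show ?thesis by simp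
qed

lemma KL_cases:
  fixes p q :: "'a::finite \<Rightarrow> real"
  shows "KL p q = (if \<exists>x. p x \<noteq> 0 \<and> q x = 0 then \<infinity>
      else ereal (\<Sum>x\<in>UNIV. if p x = 0 then 0 else p x * ln (p x / q x)))"
proof (cases "\<exists>x. p x \<noteq> 0 \<and> q x = 0")
  case True
  then obtain x where x: "p x \<noteq> 0" "q x = 0" by blast
  have "(\<Sum>x\<in>UNIV. if p x = 0 then 0 else if q x = 0 then \<infinity> else ereal (p x * ln (p x / q x))) = \<infinity>"
    unfolding sum_Pinfty using x by (intro conjI bexI[of _ x]) auto
  then show ?thesis using True unfolding KL_def by simp
next
  case False
  then have "KL p q = (\<Sum>x\<in>UNIV. ereal (if p x = 0 then 0 else p x * ln (p x / q x)))"
    unfolding KL_def by (intro sum.cong) auto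
  then show ?thesis using False by (simp add: sum_ereal)
qed

lemma gibbs:
  fixes T p :: "'a::finite \<Rightarrow> real"
  assumes "\<And>a. 0 \<le> T a" "sum T UNIV = 1" "\<And>a. 0 \<le> p a" "sum p UNIV = 1"
    "\<And>a. T a \<noteq> 0 \<Longrightarrow> p a \<noteq> 0"
  shows "0 \<le> (\<Sum>a\<in>UNIV. if T a = 0 then 0 else T a * ln (T a / p a))"
proof -
  have "T a - p a \<le> (if T a = 0 then 0 else T a * ln (T a / p a))" for a
  proof (cases "T a = 0")
    case True then show ?thesis using assms(3)[of a] by simp
  next
    case False
    then have T: "T a > 0" and p: "p a > 0" using assms(1,3,5)[of a] by (auto simp: order_le_less)
    have "ln (p a / T a) \<le> p a / T a - 1" using T p by (intro ln_le_minus_one) simp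
    then have "T a * ln (p a / T a) \<le> T a * (p a / T a - 1)" using T by (intro mult_left_mono) auto
    also have "\<dots> = p a - T a" using T by (simp add: field_simps)
    finally have "T a * ln (p a / T a) \<le> p a - T a" .
    moreover have "ln (T a / p a) = - ln (p a / T a)" using T p by (simp add: ln_div)
    ultimately show ?thesis using False by simp
  qed
  then have "(\<Sum>a\<in>UNIV. T a - p a) \<le> (\<Sum>a\<in>UNIV. if T a = 0 then 0 else T a * ln (T a / p a))"
    by (intro sum_mono) auto
  moreover have "(\<Sum>a\<in>UNIV. T a - p a) = 0" using assms(2,4) by (simp add: sum_subtractf)
  ultimately show ?thesis by simp
qed

definition KLd :: "('a::finite \<Rightarrow> real) \<Rightarrow> ('a \<Rightarrow> real) \<Rightarrow> real" where
  "KLd T p = (\<Sum>a\<in>UNIV. if T a = 0 then 0 else T a * ln (T a / p a))"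

lemma seq_ident:
  fixes x :: "nat \<Rightarrow> 'a::finite" and p :: "'a \<Rightarrow> real"
  assumes n: "n > 0" and sup: "\<And>a. emp_type n x a \<noteq> 0 \<Longrightarrow> p a \<noteq> 0"
    and pnn: "\<And>a. 0 \<le> p a"
  shows "(\<Prod>k<n. p (x k)) = (\<Prod>k<n. emp_type n x (x k)) * exp (- real n * KLd (emp_type n x) p)"
proof -
  define T where "T = emp_type n x"
  define c where "c a = card {k. k < n \<and> x k = a}" for a
  have Tc: "T a = real (c a) / real n" for a unfolding T_def c_def emp_type_def by simp
  have termw: "p a ^ c a = T a ^ c a * exp (- real n * (if T a = 0 then 0 else T a * ln (T a / p a)))" for a
  proof (cases "c a = 0")
    case True
    then show ?thesis using Tc by simp
  next
    case False
    then have T: "T a > 0" using Tc n by simp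
    then have p: "p a > 0" using sup[of a] pnn[of a] unfolding T_def by (auto simp: order_le_less)
    have nT: "real n * T a = real (c a)" using Tc n by simp
    have lnd: "ln (T a / p a) = - ln (p a / T a)" using T p by (simp add: ln_div)
    have "- real n * (T a * ln (T a / p a)) = real (c a) * ln (p a / T a)"
      unfolding lnd nT[symmetric] by (simp add: algebra_simps)
    then have "exp (- real n * (T a * ln (T a / p a))) = exp (real (c a) * ln (p a / T a))"
      by simp
    also have "\<dots> = exp (ln (p a / T a)) ^ c a" by (rule exp_of_nat_mult)
    also have "\<dots> = (p a / T a) ^ c a" using T p by simp
    finally have "T a ^ c a * exp (- real n * (T a * ln (T a / p a))) = T a ^ c a * (p a / T a) ^ c a" by simp
    also have "\<dots> = p a ^ c a" using T by (simp add: power_divide)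
    finally show ?thesis using T by simp
  qed
  have "(\<Prod>k<n. p (x k)) = (\<Prod>a\<in>UNIV. p a ^ c a)" unfolding c_def by (rule prodg)
  also have "\<dots> = (\<Prod>a\<in>UNIV. T a ^ c a * exp (- real n * (if T a = 0 then 0 else T a * ln (T a / p a))))"
    using termw by simp
  also have "\<dots> = (\<Prod>a\<in>UNIV. T a ^ c a) * exp (\<Sum>a\<in>UNIV. - real n * (if T a = 0 then 0 else T a * ln (T a / p a)))"
    by (simp add: prod.distrib exp_sum)
  also have "(\<Sum>a\<in>UNIV. - real n * (if T a = 0 then 0 else T a * ln (T a / p a))) = - real n * KLd T p"
    unfolding KLd_def by (simp add: sum_distrib_left)
  also have "(\<Prod>a\<in>UNIV. T a ^ c a) = (\<Prod>k<n. T (x k))" unfolding c_def by (rule prodg[symmetric])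
  finally show ?thesis unfolding T_def .
qed

lemma seq_zero:
  fixes x :: "nat \<Rightarrow> 'a::finite" and p :: "'a \<Rightarrow> real"
  assumes "emp_type n x a \<noteq> 0" "p a = 0"
  shows "(\<Prod>k<n. p (x k)) = 0"
proof -
  have "{k. k < n \<and> x k = a} \<noteq> {}" using assms(1) unfolding emp_type_def by auto
  moreover have "finite {k. k < n \<and> x k = a}" by auto
  ultimately have "card {k. k < n \<and> x k = a} \<noteq> 0" by (metis card_0_eq)
  then have "p a ^ card {k. k < n \<and> x k = a} = 0" using assms(2) by (metis power_0_left)
  then have "(\<Prod>a\<in>UNIV. p a ^ card {k. k < n \<and> x k = a}) = 0" by (intro prod_zero) auto
  then show ?thesis by (simp add: prodg)
qed

lemma count_types:
  assumes n: "n > 0"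
  shows "(\<Sum>x\<in>PiE {..<n} (\<lambda>_. UNIV::'a::finite set). \<Prod>k<n. emp_type n x (x k)) \<le> real (n + 1) ^ CARD('a)"
proof -
  define S where "S = PiE {..<n} (\<lambda>_. UNIV::'a set)"
  define \<tau> where "\<tau> = (emp_type n :: (nat \<Rightarrow> 'a) \<Rightarrow> 'a \<Rightarrow> real)"
  have fS: "finite S" unfolding S_def by (intro finite_PiE) auto
  have "(\<Sum>x\<in>S. \<Prod>k<n. \<tau> x (x k)) = (\<Sum>t\<in>\<tau> ` S. \<Sum>x\<in>{x\<in>S. \<tau> x = t}. \<Prod>k<n. \<tau> x (x k))"
    by (rule sum.group[symmetric]) (use fS in auto)
  also have "\<dots> \<le> (\<Sum>t\<in>\<tau> ` S. 1)"
  proof (rule sum_mono)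
    fix t assume "t \<in> \<tau> ` S"
    then obtain y where t: "t = \<tau> y" by auto
    have tnn: "0 \<le> t a" for a unfolding t \<tau>_def by (rule emp_nonneg)
    have "(\<Sum>x\<in>{x\<in>S. \<tau> x = t}. \<Prod>k<n. \<tau> x (x k)) = (\<Sum>x\<in>{x\<in>S. \<tau> x = t}. \<Prod>k<n. t (x k))"
      by (rule sum.cong) auto
    also have "\<dots> \<le> (\<Sum>x\<in>S. \<Prod>k<n. t (x k))"
      by (rule sum_mono2) (use fS tnn in \<open>auto intro: prod_nonneg\<close>)
    also have "\<dots> = (\<Prod>k<n. \<Sum>a\<in>UNIV. t a)"
      unfolding S_def by (rule prod_sum_PiE[symmetric]) auto
    also have "sum t UNIV = 1" unfolding t \<tau>_def by (rule emp_sum[OF n])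
    then have "(\<Prod>k<n. \<Sum>a\<in>UNIV. t a) = 1" by simp
    finally show "(\<Sum>x\<in>{x\<in>S. \<tau> x = t}. \<Prod>k<n. \<tau> x (x k)) \<le> 1" .
  qed
  also have "\<dots> = real (card (\<tau> ` S))" by simp
  also have "card (\<tau> ` S) \<le> (n + 1) ^ CARD('a)"
  proof -
    define V where "V = (\<lambda>j. real j / real n) ` {..n}"
    have "\<tau> ` S \<subseteq> PiE UNIV (\<lambda>_. V)"
    proof
      fix t assume "t \<in> \<tau> ` S"
      then obtain y where t: "t = \<tau> y" by auto
      have "t a \<in> V" for a
        unfolding t \<tau>_def emp_type_def V_def using emp_card_le[of n y a] by auto
      then show "t \<in> PiE UNIV (\<lambda>_. V)" by auto
    qed
    then have "card (\<tau> ` S) \<le> card (PiE (UNIV::'a set) (\<lambda>_. V))"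
      by (intro card_mono) (auto simp: V_def intro!: finite_PiE)
    also have "\<dots> = card V ^ CARD('a)" by (simp add: card_PiE)
    also have "card V \<le> n + 1" unfolding V_def using card_image_le[of "{..n}" "\<lambda>j. real j / real n"] by simp
    then have "card V ^ CARD('a) \<le> (n + 1) ^ CARD('a)" by (rule power_mono) simp
    finally show ?thesis .
  qed
  then have "real (card (\<tau> ` S)) \<le> real (n + 1) ^ CARD('a)" by (metis of_nat_le_iff of_nat_power)
  finally show ?thesis unfolding S_def \<tau>_def .
qed

lemma KLd_ok:
  fixes T :: "'a::finite \<Rightarrow> real"
  assumes "\<And>a. T a \<noteq> 0 \<Longrightarrow> p a \<noteq> 0"
  shows "KL T p = ereal (KLd T p)"
  using assms unfolding KL_cases KLd_def by auto

lemma tuple_bound: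
  fixes xs ys :: "nat \<Rightarrow> nat \<Rightarrow> 'a::finite" and P Q :: "nat \<Rightarrow> 'a pmf"
  assumes n: "n > 0" and m: "m > 0" and nN: "real n \<ge> \<alpha> * N" and mN: "real m \<ge> \<beta> * N"
    and \<alpha>: "\<alpha> > 0" and \<beta>: "\<beta> > 0"
    and E: "E \<le> (\<Sum>i<M1. ereal \<alpha> * KL (emp_type n (xs i)) (pmf (P i)))
                + (\<Sum>j<M2. ereal \<beta> * KL (emp_type m (ys j)) (pmf (Q j)))"
  defines "W \<equiv> (\<Prod>i<M1. \<Prod>k<n. pmf (P i) (xs i k)) * (\<Prod>j<M2. \<Prod>k<m. pmf (Q j) (ys j k))"
    and "V \<equiv> (\<Prod>i<M1. \<Prod>k<n. emp_type n (xs i) (xs i k)) * (\<Prod>j<M2. \<Prod>k<m. emp_type m (ys j) (ys j k))"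
  shows "(E = \<infinity> \<longrightarrow> W = 0) \<and> (\<forall>e. E = ereal e \<longrightarrow> W \<le> exp (- real N * e) * V)"
proof (cases "(\<exists>i<M1. \<exists>a. emp_type n (xs i) a \<noteq> 0 \<and> pmf (P i) a = 0) \<or>
              (\<exists>j<M2. \<exists>a. emp_type m (ys j) a \<noteq> 0 \<and> pmf (Q j) a = 0)")
  case True
  have "W = 0"
  proof (cases "\<exists>i<M1. \<exists>a. emp_type n (xs i) a \<noteq> 0 \<and> pmf (P i) a = 0")
    case True
    then obtain i a where "i < M1" "emp_type n (xs i) a \<noteq> 0" "pmf (P i) a = 0" by blast
    then have "(\<Prod>i<M1. \<Prod>k<n. pmf (P i) (xs i k)) = 0"
    proof -
      have "(\<Prod>k<n. pmf (P i) (xs i k)) = 0" by (rule seq_zero) fact+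
      then show ?thesis using \<open>i < M1\<close> by (intro prod_zero) auto
    qed
    then show ?thesis unfolding W_def by simp
  next
    case False
    then obtain j a where "j < M2" "emp_type m (ys j) a \<noteq> 0" "pmf (Q j) a = 0" using True by blast
    then have "(\<Prod>j<M2. \<Prod>k<m. pmf (Q j) (ys j k)) = 0"
    proof -
      have "(\<Prod>k<m. pmf (Q j) (ys j k)) = 0" by (rule seq_zero) fact+
      then show ?thesis using \<open>j < M2\<close> by (intro prod_zero) auto
    qed
    then show ?thesis unfolding W_def by simp
  qed
  moreover have "0 \<le> V" unfolding V_def by (intro mult_nonneg_nonneg prod_nonneg) (auto simp: emp_nonneg)
  ultimately show ?thesis by simp
next
  case False
  define d where "d i = KLd (emp_type n (xs i)) (pmf (P i))" for i
  define d' where "d' j = KLd (emp_type m (ys j)) (pmf (Q j))" for j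
  have supi: "\<And>a. emp_type n (xs i) a \<noteq> 0 \<Longrightarrow> pmf (P i) a \<noteq> 0" if "i < M1" for i
    using False that by blast
  have supj: "\<And>a. emp_type m (ys j) a \<noteq> 0 \<Longrightarrow> pmf (Q j) a \<noteq> 0" if "j < M2" for j
    using False that by blast
  have d0: "0 \<le> d i" if "i < M1" for i unfolding d_def KLd_def
    by (rule gibbs) (auto simp: emp_nonneg emp_sum[OF n] sum_pmf_eq_1 supi[OF that])
  have d0': "0 \<le> d' j" if "j < M2" for j unfolding d'_def KLd_def
    by (rule gibbs) (auto simp: emp_nonneg emp_sum[OF m] sum_pmf_eq_1 supj[OF that])
  have "(\<Sum>i<M1. ereal \<alpha> * KL (emp_type n (xs i)) (pmf (P i))) = (\<Sum>i<M1. ereal (\<alpha> * d i))"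
    by (intro sum.cong refl) (simp add: d_def KLd_ok[OF supi])
  moreover have "(\<Sum>j<M2. ereal \<beta> * KL (emp_type m (ys j)) (pmf (Q j))) = (\<Sum>j<M2. ereal (\<beta> * d' j))"
    by (intro sum.cong refl) (simp add: d'_def KLd_ok[OF supj])
  ultimately have E': "E \<le> ereal ((\<Sum>i<M1. \<alpha> * d i) + (\<Sum>j<M2. \<beta> * d' j))"
    using E by (simp add: sum_ereal)
  have "W = (\<Prod>i<M1. (\<Prod>k<n. emp_type n (xs i) (xs i k)) * exp (- real n * d i)) *
            (\<Prod>j<M2. (\<Prod>k<m. emp_type m (ys j) (ys j k)) * exp (- real m * d' j))"
    unfolding W_def d_def d'_def
    by (intro arg_cong2[where f="(*)"] prod.cong refl seq_ident[OF n] seq_ident[OF m])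
       (auto simp: supi supj)
  also have "\<dots> = V * exp (- ((\<Sum>i<M1. real n * d i) + (\<Sum>j<M2. real m * d' j)))"
    unfolding V_def by (simp add: prod.distrib exp_sum[symmetric] exp_add[symmetric] sum_negf)
  finally have W: "W = V * exp (- ((\<Sum>i<M1. real n * d i) + (\<Sum>j<M2. real m * d' j)))" .
  have "real N * ((\<Sum>i<M1. \<alpha> * d i) + (\<Sum>j<M2. \<beta> * d' j)) =
        (\<Sum>i<M1. (\<alpha> * real N) * d i) + (\<Sum>j<M2. (\<beta> * real N) * d' j)"
    by (simp add: sum_distrib_left algebra_simps)
  also have "\<dots> \<le> (\<Sum>i<M1. real n * d i) + (\<Sum>j<M2. real m * d' j)"
    using nN mN d0 d0' by (intro add_mono sum_mono mult_right_mono) (auto simp: mult.commute)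
  finally have key: "real N * ((\<Sum>i<M1. \<alpha> * d i) + (\<Sum>j<M2. \<beta> * d' j))
      \<le> (\<Sum>i<M1. real n * d i) + (\<Sum>j<M2. real m * d' j)" .
  have V0: "0 \<le> V" unfolding V_def by (intro mult_nonneg_nonneg prod_nonneg) (auto simp: emp_nonneg)
  show ?thesis
  proof (intro conjI allI impI)
    assume "E = \<infinity>" then show "W = 0" using E' by simp
  next
    fix e assume "E = ereal e"
    then have e: "e \<le> (\<Sum>i<M1. \<alpha> * d i) + (\<Sum>j<M2. \<beta> * d' j)" using E' by simp
    have "real N * e \<le> real N * ((\<Sum>i<M1. \<alpha> * d i) + (\<Sum>j<M2. \<beta> * d' j))"
      using e by (intro mult_left_mono) auto
    with key have "exp (- ((\<Sum>i<M1. real n * d i) + (\<Sum>j<M2. real m * d' j))) \<le> exp (- real N * e)"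
      by simp
    then show "W \<le> exp (- real N * e) * V" unfolding W using V0
      by (simp add: mult.commute mult_left_mono)
  qed
qed

lemma sum_V:
  assumes n: "n > 0"
  shows "(\<Sum>xs\<in>samples M n. \<Prod>i<M. \<Prod>k<n. emp_type n ((xs::nat \<Rightarrow> nat \<Rightarrow> 'a) i) (xs i k))
           \<le> real (n + 1) ^ (CARD('a::finite) * M)"
proof -
  have "(\<Sum>xs\<in>samples M n. \<Prod>i<M. \<Prod>k<n. emp_type n ((xs::nat \<Rightarrow> nat \<Rightarrow> 'a) i) (xs i k))
      = (\<Prod>i<M. \<Sum>x\<in>PiE {..<n} (\<lambda>_. UNIV::'a set). \<Prod>k<n. emp_type n x (x k))"
    unfolding samples_def by (rule prod_sum_PiE[symmetric]) (auto intro!: finite_PiE)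
  also have "\<dots> \<le> (\<Prod>i<M. real (n + 1) ^ CARD('a))"
    by (intro prod_mono conjI count_types[OF n] sum_nonneg prod_nonneg) (auto simp: emp_nonneg)
  also have "\<dots> = real (n + 1) ^ (CARD('a) * M)" by (simp add: power_mult)
  finally show ?thesis .
qed

lemma Ef_le:
  fixes P Q :: "nat \<Rightarrow> 'a::finite pmf" and xs ys :: "nat \<Rightarrow> nat \<Rightarrow> 'a"
    and dec :: "nat \<Rightarrow> (nat \<Rightarrow> nat \<Rightarrow> 'a) \<Rightarrow> (nat \<Rightarrow> nat \<Rightarrow> 'a) \<Rightarrow> (nat \<times> nat) set"
  assumes lK: "l \<in> kmatches M1 M2 K" and fl: "is_FL_test M1 M2 K \<alpha> \<beta> dec"
    and xs: "xs \<in> samples M1 (xiN \<alpha> N)" and ys: "ys \<in> samples M2 (xiN \<beta> N)"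
    and ne: "dec N xs ys \<noteq> l" and n: "xiN \<alpha> N > 0" and m: "xiN \<beta> N > 0"
  shows "Ef M1 M2 K \<alpha> \<beta> l P Q \<le>
      (\<Sum>i<M1. ereal \<alpha> * KL (emp_type (xiN \<alpha> N) (xs i)) (pmf (P i)))
    + (\<Sum>j<M2. ereal \<beta> * KL (emp_type (xiN \<beta> N) (ys j)) (pmf (Q j)))"
proof -
  define t where "t = dec N xs ys"
  define \<Omega> where "\<Omega> = (\<lambda>i. embed_pmf (emp_type (xiN \<alpha> N) (xs i)))"
  define \<Psi> where "\<Psi> = (\<lambda>j. embed_pmf (emp_type (xiN \<beta> N) (ys j)))"
  have p1: "(\<lambda>i. pmf (\<Omega> i)) = (\<lambda>i. emp_type (xiN \<alpha> N) (xs i))"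
    unfolding \<Omega>_def by (rule ext) (rule pmf_emp[OF n])
  have p2: "(\<lambda>j. pmf (\<Psi> j)) = (\<lambda>j. emp_type (xiN \<beta> N) (ys j))"
    unfolding \<Psi>_def by (rule ext) (rule pmf_emp[OF m])
  have tK: "t \<in> kmatches M1 M2 K" and tle: "\<forall>u\<in>kmatches M1 M2 K.
      Sstat t (xiN \<alpha> N) (xiN \<beta> N) xs ys \<alpha> \<beta> \<le> Sstat u (xiN \<alpha> N) (xiN \<beta> N) xs ys \<alpha> \<beta>"
    using fl xs ys unfolding is_FL_test_def t_def by blast+
  show ?thesis
  proof -
    note True = lK
    have mem: "(\<Omega>, \<Psi>) \<in> {(\<Omega>, \<Psi>). Gsum t (\<lambda>i. pmf (\<Omega> i)) (\<lambda>j. pmf (\<Psi> j)) \<alpha> \<beta>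
                            \<le> Gsum l (\<lambda>i. pmf (\<Omega> i)) (\<lambda>j. pmf (\<Psi> j)) \<alpha> \<beta>}"
      using tle True by (simp add: p1 p2 Sstat_def)
    have "Ef M1 M2 K \<alpha> \<beta> l P Q \<le> Eexp M1 M2 \<alpha> \<beta> P Q (fst (\<Omega>, \<Psi>)) (snd (\<Omega>, \<Psi>))"
      unfolding Ef_def
      by (rule INF_lower2[of t], use tK ne t_def in simp) (rule INF_lower[OF mem])
    also have "\<dots> = (\<Sum>i<M1. ereal \<alpha> * KL (emp_type (xiN \<alpha> N) (xs i)) (pmf (P i)))
    + (\<Sum>j<M2. ereal \<beta> * KL (emp_type (xiN \<beta> N) (ys j)) (pmf (Q j)))"
      unfolding Eexp_def fst_conv snd_conv using fun_cong[OF p1] fun_cong[OF p2] by simp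
    finally show ?thesis .
  qed
qed

lemma mp_bound:
  fixes P Q :: "nat \<Rightarrow> 'a::finite pmf"
    and dec :: "nat \<Rightarrow> (nat \<Rightarrow> nat \<Rightarrow> 'a) \<Rightarrow> (nat \<Rightarrow> nat \<Rightarrow> 'a) \<Rightarrow> (nat \<times> nat) set"
  assumes lK: "l \<in> kmatches M1 M2 K" and fl: "is_FL_test M1 M2 K \<alpha> \<beta> dec"
    and \<alpha>: "\<alpha> > 0" and \<beta>: "\<beta> > 0" and N: "N \<ge> 1"
  shows "(Ef M1 M2 K \<alpha> \<beta> l P Q = \<infinity> \<longrightarrow> mismatch_prob M1 M2 (xiN \<alpha> N) (xiN \<beta> N) P Q l (dec N) = 0) \<and>
    (\<forall>e. Ef M1 M2 K \<alpha> \<beta> l P Q = ereal e \<longrightarrow> mismatch_prob M1 M2 (xiN \<alpha> N) (xiN \<beta> N) P Q l (dec N)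
       \<le> exp (- real N * e) * (real (xiN \<alpha> N + 1) ^ (CARD('a) * M1) * real (xiN \<beta> N + 1) ^ (CARD('a) * M2)))"
proof -
  define n where "n = xiN \<alpha> N"
  define m where "m = xiN \<beta> N"
  define E where "E = Ef M1 M2 K \<alpha> \<beta> l P Q"
  have nN: "real n \<ge> \<alpha> * real N" unfolding n_def xiN_def by linarith
  have mN: "real m \<ge> \<beta> * real N" unfolding m_def xiN_def by linarith
  have "\<alpha> * real N > 0" using \<alpha> N by simp
  then have n: "n > 0" using nN by linarith
  have "\<beta> * real N > 0" using \<beta> N by simp
  then have m: "m > 0" using mN by linarith
  define W where "W xs ys = (\<Prod>i<M1. \<Prod>k<n. pmf (P i) (xs i k)) * (\<Prod>j<M2. \<Prod>k<m. pmf (Q j) (ys j k))"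
    for xs ys :: "nat \<Rightarrow> nat \<Rightarrow> 'a"
  define Vx where "Vx xs = (\<Prod>i<M1. \<Prod>k<n. emp_type n (xs i) (xs i k))" for xs :: "nat \<Rightarrow> nat \<Rightarrow> 'a"
  define Vy where "Vy ys = (\<Prod>j<M2. \<Prod>k<m. emp_type m (ys j) (ys j k))" for ys :: "nat \<Rightarrow> nat \<Rightarrow> 'a"
  have tb: "(E = \<infinity> \<longrightarrow> W xs ys = 0) \<and> (\<forall>e. E = ereal e \<longrightarrow> W xs ys \<le> exp (- real N * e) * (Vx xs * Vy ys))"
    if xs: "xs \<in> samples M1 n" and ys: "ys \<in> samples M2 m" and ne: "dec N xs ys \<noteq> l" for xs ys
  proof -
    have "E \<le> (\<Sum>i<M1. ereal \<alpha> * KL (emp_type n (xs i)) (pmf (P i)))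
      + (\<Sum>j<M2. ereal \<beta> * KL (emp_type m (ys j)) (pmf (Q j)))"
      unfolding E_def n_def m_def
      by (rule Ef_le[OF lK fl]) (use xs ys ne n m in \<open>simp_all add: n_def m_def\<close>)
    then show ?thesis unfolding W_def Vx_def Vy_def
      by (rule tuple_bound[OF n m nN mN \<alpha> \<beta>])
  qed
  have Vx0: "0 \<le> Vx xs" for xs unfolding Vx_def by (intro prod_nonneg) (auto simp: emp_nonneg)
  have Vy0: "0 \<le> Vy ys" for ys unfolding Vy_def by (intro prod_nonneg) (auto simp: emp_nonneg)
  have mp: "mismatch_prob M1 M2 n m P Q l (dec N) =
     (\<Sum>xs\<in>samples M1 n. \<Sum>ys\<in>samples M2 m. if dec N xs ys \<noteq> l then W xs ys else 0)"
    unfolding mismatch_prob_def W_def by simp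
  show ?thesis
    unfolding n_def[symmetric] m_def[symmetric] E_def[symmetric]
  proof (intro conjI allI impI)
    assume inf: "E = \<infinity>"
    show "mismatch_prob M1 M2 n m P Q l (dec N) = 0" unfolding mp
      by (intro sum.neutral ballI) (use tb inf in auto)
  next
    fix e assume e: "E = ereal e"
    have "mismatch_prob M1 M2 n m P Q l (dec N) \<le>
       (\<Sum>xs\<in>samples M1 n. \<Sum>ys\<in>samples M2 m. exp (- real N * e) * (Vx xs * Vy ys))"
      unfolding mp
    proof (intro sum_mono)
      fix xs ys :: "nat \<Rightarrow> nat \<Rightarrow> 'a" assume "xs \<in> samples M1 n" "ys \<in> samples M2 m"
      then show "(if dec N xs ys \<noteq> l then W xs ys else 0) \<le> exp (- real N * e) * (Vx xs * Vy ys)"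
        using tb[of xs ys] e Vx0[of xs] Vy0[of ys] by auto
    qed
    also have "\<dots> = exp (- real N * e) * (\<Sum>xs\<in>samples M1 n. \<Sum>ys\<in>samples M2 m. Vx xs * Vy ys)"
      by (simp add: sum_distrib_left)
    also have "\<dots> = exp (- real N * e) * ((\<Sum>xs\<in>samples M1 n. Vx xs) * (\<Sum>ys\<in>samples M2 m. Vy ys))"
      by (simp add: sum_product)
    also have "\<dots> \<le> exp (- real N * e) * (real (n + 1) ^ (CARD('a) * M1) * real (m + 1) ^ (CARD('a) * M2))"
      unfolding Vx_def Vy_def
      by (intro mult_left_mono mult_mono sum_V[OF n] sum_V[OF m] sum_nonneg prod_nonneg) (auto simp: emp_nonneg)
    finally show "mismatch_prob M1 M2 n m P Q l (dec N)
       \<le> exp (- real N * e) * (real (n + 1) ^ (CARD('a) * M1) * real (m + 1) ^ (CARD('a) * M2))" .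
  qed
qed

lemma mp_nonneg: "0 \<le> mismatch_prob M1 M2 n m P Q l dec"
  unfolding mismatch_prob_def by (intro sum_nonneg) (auto intro!: mult_nonneg_nonneg prod_nonneg)

lemma xiN_le: "\<alpha> > 0 \<Longrightarrow> real (xiN \<alpha> N + 1) \<le> \<alpha> * real N + 2"
  unfolding xiN_def by (simp add: of_nat_nat) linarith

lemma ln_lim: "(a::real) > 0 \<Longrightarrow> ((\<lambda>N::nat. ln (a * real N + 2) / real N) \<longlongrightarrow> 0) sequentially"
  by real_asymp

theorem theorem2:
  fixes P Q :: "nat \<Rightarrow> 'a::finite pmf"
    and M1 M2 K :: nat and \<alpha> \<beta> :: real
    and dec :: "nat \<Rightarrow> (nat \<Rightarrow> nat \<Rightarrow> 'a) \<Rightarrow> (nat \<Rightarrow> nat \<Rightarrow> 'a) \<Rightarrow> (nat \<times> nat) set"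
    and l :: "(nat \<times> nat) set"
  assumes "M2 \<le> M1" and "K \<le> M2" and "1 \<le> K"
    and "\<alpha> > 0" and "\<beta> > 0"
    and "is_FL_test M1 M2 K \<alpha> \<beta> dec"
    and "l \<in> kmatches M1 M2 K"
    and "inj_on P {..<M1}" and "inj_on Q {..<M2}"
    and "in_hyp M1 M2 l P Q"
  shows "Ef M1 M2 K \<alpha> \<beta> l P Q
           \<le> liminf (\<lambda>N. exponent_at
                (mismatch_prob M1 M2 (xiN \<alpha> N) (xiN \<beta> N) P Q l (dec N)) N)"
proof -
  note \<alpha> = assms(4) and \<beta> = assms(5) and fl = assms(6) and lK = assms(7)
  define mp where "mp N = mismatch_prob M1 M2 (xiN \<alpha> N) (xiN \<beta> N) P Q l (dec N)" for N
  define f where "f N = exponent_at (mp N) N" for N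
  define E where "E = Ef M1 M2 K \<alpha> \<beta> l P Q"
  note bnd = mp_bound[where P=P and Q=Q, OF lK fl \<alpha> \<beta>, folded mp_def E_def]
  have "E \<le> liminf f"
  proof (cases E)
    case MInf then show ?thesis by simp
  next
    case PInf
    have "eventually (\<lambda>N. \<infinity> \<le> f N) sequentially"
      unfolding eventually_sequentially
    proof (intro exI[of _ 1] allI impI)
      fix N :: nat assume "N \<ge> 1"
      then have "mp N = 0" using bnd[of N] PInf by blast
      then show "\<infinity> \<le> f N" unfolding f_def exponent_at_def by simp
    qed
    then have "liminf (\<lambda>_. \<infinity>) \<le> liminf f" by (rule Liminf_mono)
    then show ?thesis using PInf by (simp add: Liminf_const)
  next
    case (real e)
    define c1 where "c1 = real (CARD('a) * M1)"
    define c2 where "c2 = real (CARD('a) * M2)"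
    define h where "h N = e - (c1 * (ln (\<alpha> * real N + 2) / real N) + c2 * (ln (\<beta> * real N + 2) / real N))" for N :: nat
    have "(h \<longlongrightarrow> e - (c1 * 0 + c2 * 0)) sequentially"
      unfolding h_def by (intro tendsto_intros ln_lim \<alpha> \<beta>)
    then have "((\<lambda>N. ereal (h N)) \<longlongrightarrow> ereal e) sequentially"
      by (intro tendsto_ereal) simp
    then have lh: "liminf (\<lambda>N. ereal (h N)) = ereal e"
      by (intro lim_imp_Liminf) simp_all
    have "eventually (\<lambda>N. ereal (h N) \<le> f N) sequentially"
      unfolding eventually_sequentially
    proof (intro exI[of _ 1] allI impI)
      fix N :: nat assume N: "N \<ge> 1"
      define n where "n = xiN \<alpha> N"
      define m where "m = xiN \<beta> N"
      have B: "mp N \<le> exp (- real N * e) * (real (n + 1) ^ (CARD('a) * M1) * real (m + 1) ^ (CARD('a) * M2))"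
        using bnd[OF N] real unfolding n_def m_def by blast
      show "ereal (h N) \<le> f N"
      proof (cases "mp N = 0")
        case True then show ?thesis unfolding f_def exponent_at_def by simp
      next
        case False
        have "0 \<le> mp N" unfolding mp_def by (rule mp_nonneg)
        then have pos: "mp N > 0" using False by simp
        have "ln (mp N) \<le> ln (exp (- real N * e) * (real (n + 1) ^ (CARD('a) * M1) * real (m + 1) ^ (CARD('a) * M2)))"
          using pos B by (subst ln_le_cancel_iff) auto
        also have "\<dots> = - real N * e + (c1 * ln (real (n + 1)) + c2 * ln (real (m + 1)))"
          unfolding c1_def c2_def by (simp add: ln_mult ln_realpow)
        also have "\<dots> \<le> - real N * e + (c1 * ln (\<alpha> * real N + 2) + c2 * ln (\<beta> * real N + 2))"
          unfolding c1_def c2_def n_def m_def using xiN_le[OF \<alpha>, of N] xiN_le[OF \<beta>, of N]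
          by (intro add_mono mult_left_mono add_left_mono) auto
        finally have L: "ln (mp N) \<le> - real N * e + (c1 * ln (\<alpha> * real N + 2) + c2 * ln (\<beta> * real N + 2))" .
        have Npos: "real N > 0" using N by simp
        have "h N = (real N * e - (c1 * ln (\<alpha> * real N + 2) + c2 * ln (\<beta> * real N + 2))) / real N"
          unfolding h_def using Npos by (simp add: field_simps)
        also have "\<dots> \<le> - ln (mp N) / real N"
          using L Npos by (intro divide_right_mono) auto
        finally show ?thesis unfolding f_def exponent_at_def using False by simp
      qed
    qed
    then have "liminf (\<lambda>N. ereal (h N)) \<le> liminf f" by (rule Liminf_mono)
    then show ?thesis using lh real by simp
  qed
  then show ?thesis unfolding E_def f_def mp_def .
qed

end
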